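(* Let $t\ge0$, let $b_0,\dots,b_t\ge0$ be integers, let $M=\{0^{(b_0)},1^{(b_1)},\dots,t^{(b_t)}\}$ be the multiset containing $b_i$ copies of $i$, and let $0\le k\le t$. Then the number of $k$-vn-arrangements of $M$ is \[\binom{b_0+b_1+\cdots+b_k}{b_0,b_1,\dots,b_k}\prod_{i=1}^{t-k}\binom{b_i+b_{i+1}+\cdots+b_{i+k}}{b_{i+k}}.\]
   Context: Let $b=b_0+\cdots+b_t$. A $k$-vn-arrangement of $M$ is a sequence $(v_1,\dots,v_b)$ listing the elements of $M$ with their multiplicities such that $v_{i+1}-v_i\le k$ for all $1\le i<b$. The first factor is a multinomial coefficient, and an empty product equals $1$. *)

theory Defs
  imports Main "HOL-Library.Multiset"
begin

definition multinomial_coeff :: "nat set \<Rightarrow> (nat \<Rightarrow> nat) \<Rightarrow> nat" where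
  "multinomial_coeff I b = fact (\<Sum>i\<in>I. b i) div (\<Prod>i\<in>I. fact (b i))"

definition vn_multiset :: "nat \<Rightarrow> (nat \<Rightarrow> nat) \<Rightarrow> nat multiset" where
  "vn_multiset t b = (\<Sum>i\<in>{0..t}. replicate_mset (b i) i)"

definition vn_arrangements :: "nat \<Rightarrow> nat multiset \<Rightarrow> nat list set" where
  "vn_arrangements k M = {vs. mset vs = M \<and>
      (\<forall>i. Suc i < length vs \<longrightarrow> int (vs ! Suc i) - int (vs ! i) \<le> int k)}"

end

theory Submission
  imports Defs
begin

definition Iset :: "nat \<Rightarrow> nat \<Rightarrow> nat list \<Rightarrow> nat \<Rightarrow> nat list set" where
  "Iset k m w n = {v. filter (\<lambda>y. y \<noteq> m) v = w \<and> count (mset v) m = n \<and>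
      successively (\<lambda>x y. y \<le> x + k) v}"

lemma Iset_nil: "Iset k m [] n = {replicate n m}"
proof -
  have "v = replicate n m" if "filter (\<lambda>y. y \<noteq> m) v = []" "count (mset v) m = n" for v
  proof -
    have "\<forall>y\<in>set v. y = m" using that(1) by (simp add: filter_empty_conv)
    then have "v = replicate (length v) m" by (simp add: replicate_length_same)
    moreover have "length v = n" using that(2) \<open>\<forall>y\<in>set v. y = m\<close>
      by (metis calculation count_replicate_mset mset_replicate)
    ultimately show ?thesis by simp
  qed
  moreover have "successively (\<lambda>x y. y \<le> x + k) (replicate n m)"
    by (simp add: successively_conv_nth)
  ultimately show ?thesis unfolding Iset_def by auto
qed

lemma last_not_m:
  assumes "successively (\<lambda>x y. y \<le> x + k) (v0 @ [m])" "filter (\<lambda>y. y \<noteq> m) v0 = w' @ [x]"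
  shows "m \<le> x + k"
  using assms
proof (induction v0 rule: rev_induct)
  case Nil then show ?case by simp
next
  case (snoc y u)
  show ?case
  proof (cases "y = m")
    case True
    then show ?thesis using snoc by (simp add: successively_append_iff)
  next
    case False
    then show ?thesis using snoc by (simp add: successively_append_iff)
  qed
qed

lemma Iset_snoc_bad:
  assumes "x \<noteq> m" "x < m" "\<not> m \<le> x + k" "successively (\<lambda>x y. y \<le> x + k) (w' @ [x])"
  shows "Iset k m (w' @ [x]) n = (\<lambda>v. v @ [x]) ` Iset k m w' n"
proof safe
  fix v assume v: "v \<in> Iset k m (w' @ [x]) n"
  then have "v \<noteq> []" unfolding Iset_def by auto
  then obtain v0 y where vy: "v = v0 @ [y]" by (metis rev_exhaust)
  show "v \<in> (\<lambda>v. v @ [x]) ` Iset k m w' n"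
  proof (cases "y = m")
    case True
    then show ?thesis using v vy last_not_m[of k v0 m w' x] assms(3) unfolding Iset_def by auto
  next
    case False
    then show ?thesis using v vy unfolding Iset_def by (auto simp: successively_append_iff)
  qed
next
  fix v assume v: "v \<in> Iset k m w' n"
  have "successively (\<lambda>x y. y \<le> x + k) (v @ [x])"
  proof (cases "v = []")
    case False
    have "x \<le> last v + k"
    proof (cases "last v = m")
      case True then show ?thesis using assms by simp
    next
      case False
      then obtain u where u: "v = u @ [last v]" using \<open>v \<noteq> []\<close> by (metis append_butlast_last_id)
      then have "filter (\<lambda>y. y \<noteq> m) v = filter (\<lambda>y. y \<noteq> m) u @ [last v]" using False
        by (metis (mono_tags, lifting) filter.simps filter_append)
      then have "w' = filter (\<lambda>y. y \<noteq> m) u @ [last v]" using v unfolding Iset_def by auto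
      then have "w' \<noteq> [] \<and> last w' = last v" by simp
      then show ?thesis using assms(4) by (auto simp: successively_append_iff)
    qed
    then show ?thesis using v False unfolding Iset_def by (auto simp: successively_append_iff)
  qed simp
  then show "v @ [x] \<in> Iset k m (w' @ [x]) n" using v assms(1) unfolding Iset_def by auto
qed

lemma Iset_finite: "finite (Iset k m w n)"
proof -
  have "Iset k m w n \<subseteq> {v. set v \<subseteq> set w \<union> {m} \<and> length v = length w + n}"
  proof safe
    fix v y assume v: "v \<in> Iset k m w n" and "y \<in> set v" "y \<notin> set w"
    then show "y = m" unfolding Iset_def by auto
  next
    fix v assume v: "v \<in> Iset k m w n"
    have "length (filter (\<lambda>y. y \<noteq> m) v) + length (filter (\<lambda>y. \<not> y \<noteq> m) v) = length v"
      by (rule sum_length_filter_compl)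
    moreover have "length (filter (\<lambda>y. \<not> y \<noteq> m) v) = count (mset v) m"
    proof -
      have e: "(\<lambda>y. \<not> y \<noteq> m) = (=) m" by auto
      show ?thesis by (simp only: e count_mset count_list_eq_length_filter)
    qed
    ultimately show "length v = length w + n" using v unfolding Iset_def by auto
  qed
  moreover have "finite {v. set v \<subseteq> set w \<union> {m} \<and> length v = length w + n}"
    by (rule finite_lists_length_eq) simp
  ultimately show ?thesis by (rule finite_subset)
qed

lemma last_filter_aux:
  assumes "v \<noteq> []" "last v \<noteq> m"
  shows "filter (\<lambda>y. y \<noteq> m) v = filter (\<lambda>y. y \<noteq> m) (butlast v) @ [last v]"
proof -
  obtain u y where "v = u @ [y]" using assms(1) by (metis rev_exhaust)
  then show ?thesis using assms by simp
qed

lemma Iset_X: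
  assumes "x \<noteq> m" "x < m" "successively (\<lambda>x y. y \<le> x + k) (w' @ [x])"
  shows "(\<lambda>v. v @ [x]) ` Iset k m w' n = {v \<in> Iset k m (w' @ [x]) n. last v \<noteq> m}"
proof -
  have 1: "\<exists>u \<in> Iset k m w' n. v = u @ [x]" if v: "v \<in> Iset k m (w' @ [x]) n" "last v \<noteq> m" for v
  proof -
    have "v \<noteq> []" using v unfolding Iset_def by auto
    then obtain v0 y where vy: "v = v0 @ [y]" by (metis rev_exhaust)
    then show ?thesis
      using v vy unfolding Iset_def by (auto simp: successively_append_iff)
  qed
  have 2: "v @ [x] \<in> Iset k m (w' @ [x]) n" if v: "v \<in> Iset k m w' n" for v
  proof -
    have "successively (\<lambda>x y. y \<le> x + k) (v @ [x])"
    proof (cases "v = []")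
      case False
      have "x \<le> last v + k"
      proof (cases "last v = m")
        case True then show ?thesis using assms by simp
      next
        case False
        then have "w' = filter (\<lambda>y. y \<noteq> m) (butlast v) @ [last v]"
          using v last_filter_aux[OF \<open>v \<noteq> []\<close> False] unfolding Iset_def by auto
        then have "w' \<noteq> [] \<and> last w' = last v" by simp
        then show ?thesis using assms(3) by (auto simp: successively_append_iff)
      qed
      then show ?thesis using v False unfolding Iset_def by (auto simp: successively_append_iff)
    qed simp
    then show ?thesis using v assms(1) unfolding Iset_def by auto
  qed
  show ?thesis
  proof (intro equalityI subsetI)
    fix v assume "v \<in> (\<lambda>v. v @ [x]) ` Iset k m w' n"
    then obtain u where "u \<in> Iset k m w' n" "v = u @ [x]" by blast
    then show "v \<in> {v \<in> Iset k m (w' @ [x]) n. last v \<noteq> m}" using 2 assms(1) by simp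
  next
    fix v assume "v \<in> {v \<in> Iset k m (w' @ [x]) n. last v \<noteq> m}"
    then obtain u where "u \<in> Iset k m w' n" "v = u @ [x]" using 1 by blast
    then show "v \<in> (\<lambda>v. v @ [x]) ` Iset k m w' n" by blast
  qed
qed

lemma Iset_bad:
  assumes "\<not> m \<le> x + k" "v \<in> Iset k m (w' @ [x]) n"
  shows "last v \<noteq> m"
proof
  assume l: "last v = m"
  have "v \<noteq> []" using assms unfolding Iset_def by auto
  define u where "u = butlast v"
  have vu: "v = u @ [m]" unfolding u_def using l \<open>v \<noteq> []\<close> by (metis append_butlast_last_id)
  have "successively (\<lambda>x y. y \<le> x + k) (u @ [m])" "filter (\<lambda>y. y \<noteq> m) u = w' @ [x]"
    using assms(2) unfolding Iset_def vu by auto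
  then show False using last_not_m[of k u m w' x] assms(1) by simp
qed

lemma Iset_Y:
  assumes "x \<noteq> m" "m \<le> x + k"
  shows "(\<lambda>v. v @ [m]) ` Iset k m (w' @ [x]) n = {v \<in> Iset k m (w' @ [x]) (Suc n). last v = m}"
proof -
  have 1: "\<exists>u \<in> Iset k m (w' @ [x]) n. v = u @ [m]"
    if v: "v \<in> Iset k m (w' @ [x]) (Suc n)" "last v = m" for v
  proof -
    have "v \<noteq> []" using v unfolding Iset_def by auto
    define u where "u = butlast v"
    have vu: "v = u @ [m]" unfolding u_def using v \<open>v \<noteq> []\<close> by (metis append_butlast_last_id)
    have "u \<in> Iset k m (w' @ [x]) n"
      using v unfolding Iset_def vu by (auto simp: successively_append_iff)
    then show ?thesis using vu by blast
  qed
  have 2: "v @ [m] \<in> Iset k m (w' @ [x]) (Suc n)" if v: "v \<in> Iset k m (w' @ [x]) n" for v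
  proof -
    have "v \<noteq> []" using v unfolding Iset_def by auto
    have "m \<le> last v + k"
    proof (cases "last v = m")
      case False
      then have "w' @ [x] = filter (\<lambda>y. y \<noteq> m) (butlast v) @ [last v]"
        using v last_filter_aux[OF \<open>v \<noteq> []\<close> False] unfolding Iset_def by auto
      then show ?thesis using assms by simp
    qed simp
    then show ?thesis using v \<open>v \<noteq> []\<close> unfolding Iset_def
      by (auto simp: successively_append_iff)
  qed
  show ?thesis
  proof (intro equalityI subsetI)
    fix v assume "v \<in> (\<lambda>v. v @ [m]) ` Iset k m (w' @ [x]) n"
    then obtain u where "u \<in> Iset k m (w' @ [x]) n" "v = u @ [m]" by blast
    then show "v \<in> {v \<in> Iset k m (w' @ [x]) (Suc n). last v = m}" using 2 by simp
  next
    fix v assume "v \<in> {v \<in> Iset k m (w' @ [x]) (Suc n). last v = m}"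
    then obtain u where "u \<in> Iset k m (w' @ [x]) n" "v = u @ [m]" using 1 by blast
    then show "v \<in> (\<lambda>v. v @ [m]) ` Iset k m (w' @ [x]) n" by blast
  qed
qed

lemma card_split_pred:
  assumes "finite A"
  shows "card A = card {x \<in> A. P x} + card {x \<in> A. \<not> P x}"
proof -
  have "A = {x \<in> A. P x} \<union> {x \<in> A. \<not> P x}" by auto
  then have "card A = card ({x \<in> A. P x} \<union> {x \<in> A. \<not> P x})" by simp
  also have "\<dots> = card {x \<in> A. P x} + card {x \<in> A. \<not> P x}"
    by (rule card_Un_disjoint) (use assms in auto)
  finally show ?thesis .
qed

lemma Iset_card:
  assumes "\<forall>y\<in>set w. y < m" "successively (\<lambda>x y. y \<le> x + k) w"
  shows "card (Iset k m w n) = (length (filter (\<lambda>y. m \<le> y + k) w) + n) choose n"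
  using assms
proof (induction w arbitrary: n rule: rev_induct)
  case Nil
  then show ?case by (simp add: Iset_nil)
next
  case (snoc x w')
  have xm: "x < m" "x \<noteq> m" using snoc.prems by auto
  have hw': "successively (\<lambda>x y. y \<le> x + k) w'" "\<forall>y\<in>set w'. y < m"
    using snoc.prems by (auto simp: successively_append_iff)
  have inj: "inj (\<lambda>v. v @ [z])" for z :: nat by (simp add: inj_def)
  have cardX: "card {v \<in> Iset k m (w' @ [x]) n. last v \<noteq> m} = card (Iset k m w' n)" for n
  proof -
    have "card {v \<in> Iset k m (w' @ [x]) n. last v \<noteq> m} = card ((\<lambda>v. v @ [x]) ` Iset k m w' n)"
      using Iset_X[OF xm(2) xm(1) snoc.prems(2)] by simp
    also have "\<dots> = card (Iset k m w' n)" by (rule card_image) (rule inj_on_subset[OF inj], simp)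
    finally show ?thesis .
  qed
  show ?case
  proof (cases "m \<le> x + k")
    case False
    have "card (Iset k m (w' @ [x]) n) = card {v \<in> Iset k m (w' @ [x]) n. last v \<noteq> m}"
    proof -
      have "{v \<in> Iset k m (w' @ [x]) n. last v \<noteq> m} = Iset k m (w' @ [x]) n"
        using Iset_bad[OF False] by blast
      then show ?thesis by simp
    qed
    also have "\<dots> = card (Iset k m w' n)" by (rule cardX)
    finally show ?thesis using snoc.IH[OF hw'(2) hw'(1)] False by simp
  next
    case True
    let ?s = "length (filter (\<lambda>y. m \<le> y + k) w')"
    have sl: "length (filter (\<lambda>y. m \<le> y + k) (w' @ [x])) = Suc ?s" using True by simp
    show ?thesis unfolding sl
    proof (induction n)
      case 0
      have "last v \<noteq> m" if v: "v \<in> Iset k m (w' @ [x]) 0" for v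
      proof
        assume "last v = m"
        moreover have "v \<noteq> []" using v unfolding Iset_def by auto
        ultimately have "m \<in> set v" by (metis last_in_set)
        then show False using v unfolding Iset_def by simp
      qed
      then have "{v \<in> Iset k m (w' @ [x]) 0. last v = m} = {}" by blast
      then have "card {v \<in> Iset k m (w' @ [x]) 0. last v = m} = 0" by (simp only: card.empty)
      then have "card (Iset k m (w' @ [x]) 0) = card (Iset k m w' 0)"
        using card_split_pred[OF Iset_finite, of k m "w' @ [x]" 0 "\<lambda>v. last v \<noteq> m"] cardX[of 0]
        by simp
      then show ?case using snoc.IH[OF hw'(2) hw'(1), of 0] by simp
    next
      case (Suc n)
      have cY: "card {v \<in> Iset k m (w' @ [x]) (Suc n). \<not> last v \<noteq> m} = card (Iset k m (w' @ [x]) n)"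
      proof -
        have "card {v \<in> Iset k m (w' @ [x]) (Suc n). \<not> last v \<noteq> m} =
              card ((\<lambda>v. v @ [m]) ` Iset k m (w' @ [x]) n)"
          using Iset_Y[OF xm(2) True] by simp
        also have "\<dots> = card (Iset k m (w' @ [x]) n)"
          by (rule card_image) (rule inj_on_subset[OF inj], simp)
        finally show ?thesis .
      qed
      have "card (Iset k m (w' @ [x]) (Suc n)) = card (Iset k m w' (Suc n)) + card (Iset k m (w' @ [x]) n)"
        using card_split_pred[OF Iset_finite, of k m "w' @ [x]" "Suc n" "\<lambda>v. last v \<noteq> m"]
          cardX[of "Suc n"] cY by simp
      also have "\<dots> = ((?s + Suc n) choose (Suc n)) + ((Suc ?s + n) choose n)"
        using snoc.IH[OF hw'(2) hw'(1), of "Suc n"] Suc.IH by simp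
      also have "\<dots> = (Suc ?s + Suc n) choose (Suc n)"
        by (simp add: add.commute)
      finally show ?case .
    qed
  qed
qed


definition Arr :: "nat \<Rightarrow> nat multiset \<Rightarrow> nat list set" where
  "Arr k M = {vs. mset vs = M \<and> successively (\<lambda>x y. y \<le> x + k) vs}"

lemma vn_Arr: "vn_arrangements k M = Arr k M"
  unfolding vn_arrangements_def Arr_def successively_conv_nth by auto

lemma Arr_finite: "finite (Arr k M)"
proof -
  have "Arr k M \<subseteq> {v. set v \<subseteq> set_mset M \<and> length v = size M}"
    unfolding Arr_def by auto
  moreover have "finite {v. set v \<subseteq> set_mset M \<and> length v = size M}"
    by (rule finite_lists_length_eq) simp
  ultimately show ?thesis by (rule finite_subset)
qed

lemma del_succ:
  fixes v :: "nat list"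
  assumes "successively (\<lambda>x y. y \<le> x + k) v" "\<forall>y\<in>set v. y \<le> m"
  shows "successively (\<lambda>x y. y \<le> x + k) (filter (\<lambda>y. y \<noteq> m) v)"
  using assms
proof (induction v)
  case Nil then show ?case by simp
next
  case (Cons a v')
  have IH: "successively (\<lambda>x y. y \<le> x + k) (filter (\<lambda>y. y \<noteq> m) v')"
  proof -
    have "successively (\<lambda>x y. y \<le> x + k) v'"
      using Cons.prems(1) by (cases v') auto
    then show ?thesis using Cons.IH Cons.prems(2) by simp
  qed
  show ?case
  proof (cases "a = m")
    case True then show ?thesis using IH by simp
  next
    case False
    show ?thesis
    proof (cases "filter (\<lambda>y. y \<noteq> m) v'")
      case Nil then show ?thesis using False by simp
    next
      case (Cons h r)
      have "v' \<noteq> []" using Cons by auto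
      then obtain c v'' where cv: "v' = c # v''" by (cases v') auto
      have ca: "c \<le> a + k" using Cons.prems(1) cv by simp
      have "h \<le> a + k"
      proof (cases "c = m")
        case True
        have "h \<in> set (filter (\<lambda>y. y \<noteq> m) v')" using Cons by simp
        then have "h \<in> set v'" by simp
        then have "h \<le> m" using Cons.prems(2) by simp
        then show ?thesis using ca True by linarith
      next
        case False
        then show ?thesis using Cons cv ca by simp
      qed
      then show ?thesis using IH Cons \<open>a \<noteq> m\<close> by (simp add: successively_Cons)
    qed
  qed
qed

lemma Arr_step:
  assumes "\<forall>y\<in>#M'. y < m"
  shows "card (Arr k (M' + replicate_mset n m)) =
         card (Arr k M') * ((size (filter_mset (\<lambda>y. m \<le> y + k) M') + n) choose n)"
proof -
  let ?M = "M' + replicate_mset n m"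
  have "m \<notin># M'" using assms by auto
  then have cm: "count M' m = 0" by (simp add: not_in_iff)
  have fM: "filter_mset (\<lambda>y. y \<noteq> m) M' = M'"
    unfolding multiset_eq_iff using cm by auto
  have eq: "Arr k ?M = (\<Union>w\<in>Arr k M'. Iset k m w n)"
  proof (intro equalityI subsetI)
    fix v assume v: "v \<in> Arr k ?M"
    let ?w = "filter (\<lambda>y. y \<noteq> m) v"
    have "mset ?w = M'" using v fM unfolding Arr_def by simp
    moreover have "\<forall>y\<in>set v. y \<le> m"
    proof
      fix y assume "y \<in> set v"
      then have "y \<in># mset v" by simp
      moreover have mv: "mset v = ?M" using v unfolding Arr_def by simp
      ultimately have "y \<in># ?M" by (simp only: mv)
      then have "y \<in># M' \<or> y = m" by (metis in_replicate_mset union_iff)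
      then show "y \<le> m" using assms by auto
    qed
    then have "successively (\<lambda>x y. y \<le> x + k) ?w" using del_succ v unfolding Arr_def by auto
    ultimately have "?w \<in> Arr k M'" unfolding Arr_def by simp
    moreover have "v \<in> Iset k m ?w n" using v cm unfolding Arr_def Iset_def by simp
    ultimately show "v \<in> (\<Union>w\<in>Arr k M'. Iset k m w n)" by blast
  next
    fix v assume "v \<in> (\<Union>w\<in>Arr k M'. Iset k m w n)"
    then obtain w where w: "w \<in> Arr k M'" "v \<in> Iset k m w n" by blast
    have "count (mset v) y = count ?M y" for y
    proof (cases "y = m")
      case True then show ?thesis using w cm unfolding Iset_def by simp
    next
      case False
      have "count (mset v) y = count (mset (filter (\<lambda>y. y \<noteq> m) v)) y" using False by simp
      also have "\<dots> = count M' y" using w unfolding Iset_def Arr_def by simp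
      finally show ?thesis using False by simp
    qed
    then have "mset v = ?M" by (simp add: multiset_eq_iff)
    then show "v \<in> Arr k ?M" using w unfolding Iset_def Arr_def by simp
  qed
  have "card (Arr k ?M) = (\<Sum>w\<in>Arr k M'. card (Iset k m w n))"
    unfolding eq
    by (rule card_UN_disjoint[OF Arr_finite]) (simp add: Iset_finite, auto simp: Iset_def)
  also have "\<dots> = (\<Sum>w\<in>Arr k M'. (size (filter_mset (\<lambda>y. m \<le> y + k) M') + n) choose n)"
  proof (rule sum.cong)
    fix w assume w: "w \<in> Arr k M'"
    have "\<forall>y\<in>set w. y < m" using w assms unfolding Arr_def by auto
    moreover have "successively (\<lambda>x y. y \<le> x + k) w" using w unfolding Arr_def by simp
    moreover have "length (filter (\<lambda>y. m \<le> y + k) w) = size (filter_mset (\<lambda>y. m \<le> y + k) M')"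
    proof -
      have "mset w = M'" using w unfolding Arr_def by simp
      have "length (filter (\<lambda>y. m \<le> y + k) w) = size (mset (filter (\<lambda>y. m \<le> y + k) w))"
        by (rule size_mset[symmetric])
      then show ?thesis using \<open>mset w = M'\<close> by simp
    qed
    ultimately show "card (Iset k m w n) = (size (filter_mset (\<lambda>y. m \<le> y + k) M') + n) choose n"
      using Iset_card by simp
  qed simp
  finally show ?thesis by simp
qed


lemma vn_Suc: "vn_multiset (Suc t) b = vn_multiset t b + replicate_mset (b (Suc t)) (Suc t)"
  by (simp add: vn_multiset_def sum.atLeast0_atMost_Suc)

lemma vn_0: "vn_multiset 0 b = {#} + replicate_mset (b 0) 0"
  by (simp add: vn_multiset_def)

lemma vn_lt: "\<forall>y\<in># vn_multiset t b. y < Suc t"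
  by (induction t) (auto simp: vn_Suc vn_0 split: if_splits)

lemma filter_replicate_mset: "filter_mset P (replicate_mset n x) = (if P x then replicate_mset n x else {#})"
  by (induction n) auto

lemma vn_size_filter:
  "size (filter_mset P (vn_multiset t b)) = (\<Sum>i\<in>{0..t}. if P i then b i else 0)"
  by (induction t) (auto simp: vn_Suc vn_0 filter_replicate_mset sum.atLeast0_atMost_Suc)

lemma Arr_empty: "Arr k {#} = {[]}"
  unfolding Arr_def by auto

lemma card_vn:
  "card (Arr k (vn_multiset t b)) = (\<Prod>m\<in>{1..t}. (\<Sum>j\<in>{m-k..m}. b j) choose b m)"
proof (induction t)
  case 0
  have "card (Arr k ({#} + replicate_mset (b 0) 0)) =
        card (Arr k {#}) * ((size (filter_mset (\<lambda>y. 0 \<le> y + k) {#}) + b 0) choose b 0)"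
    by (rule Arr_step) simp
  then show ?case by (simp add: vn_0 Arr_empty)
next
  case (Suc t)
  have nl: "\<not> Suc t < Suc t - k" by arith
  have S: "size (filter_mset (\<lambda>y. Suc t \<le> y + k) (vn_multiset t b)) = (\<Sum>j\<in>{Suc t - k..t}. b j)"
  proof -
    have "size (filter_mset (\<lambda>y. Suc t \<le> y + k) (vn_multiset t b)) =
          (\<Sum>i\<in>{0..t}. if Suc t \<le> i + k then b i else 0)" by (rule vn_size_filter)
    also have "\<dots> = (\<Sum>i\<in>{i\<in>{0..t}. Suc t \<le> i + k}. b i)"
      by (rule sum.inter_filter[symmetric]) simp
    also have "{i\<in>{0..t}. Suc t \<le> i + k} = {Suc t - k..t}" by auto
    finally show ?thesis .
  qed
  have "card (Arr k (vn_multiset (Suc t) b)) =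
        card (Arr k (vn_multiset t b)) *
        ((size (filter_mset (\<lambda>y. Suc t \<le> y + k) (vn_multiset t b)) + b (Suc t)) choose b (Suc t))"
    unfolding vn_Suc by (rule Arr_step[OF vn_lt])
  also have "\<dots> = (\<Prod>m\<in>{1..t}. (\<Sum>j\<in>{m-k..m}. b j) choose b m) *
        ((\<Sum>j\<in>{Suc t - k..Suc t}. b j) choose b (Suc t))"
    unfolding S Suc.IH using nl by simp
  also have "\<dots> = (\<Prod>m\<in>{1..Suc t}. (\<Sum>j\<in>{m-k..m}. b j) choose b m)"
    using nl by simp
  finally show ?case .
qed

lemma multinomial_prod:
  fixes b :: "nat \<Rightarrow> nat"
  shows "fact (\<Sum>i\<in>{0..k}. b i) = (\<Prod>m\<in>{1..k}. (\<Sum>j\<in>{0..m}. b j) choose b m) * (\<Prod>i\<in>{0..k}. fact (b i))"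
proof (induction k)
  case 0 then show ?case by simp
next
  case (Suc k)
  let ?S = "\<Sum>i\<in>{0..k}. b i"
  have "fact (\<Sum>i\<in>{0..Suc k}. b i) = (fact (?S + b (Suc k)) :: nat)"
    by (simp add: sum.atLeast0_atMost_Suc)
  also have "\<dots> = fact (b (Suc k)) * fact ?S * ((?S + b (Suc k)) choose b (Suc k))"
    using binomial_fact_lemma[of "b (Suc k)" "?S + b (Suc k)"] by simp
  also have "\<dots> = (\<Prod>m\<in>{1..Suc k}. (\<Sum>j\<in>{0..m}. b j) choose b m) * (\<Prod>i\<in>{0..Suc k}. fact (b i))"
    unfolding Suc.IH by (simp add: sum.atLeast0_atMost_Suc prod.atLeast0_atMost_Suc mult_ac)
  finally show ?case .
qed

lemma multinomial_eq:
  "multinomial_coeff {0..k} b = (\<Prod>m\<in>{1..k}. (\<Sum>j\<in>{0..m}. b j) choose b m)"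
proof -
  have "(\<Prod>i\<in>{0..k}. fact (b i) :: nat) > 0" by (simp add: prod_pos)
  then show ?thesis unfolding multinomial_coeff_def multinomial_prod by simp
qed

lemma final_aux:
  "(\<Prod>m\<in>{1..k+d}. (\<Sum>j\<in>{m-k..m}. b j) choose b m) =
    multinomial_coeff {0..k} b *
    (\<Prod>i\<in>{1..k+d-k}. (\<Sum>j\<in>{i..i+k}. b j) choose b (i+k))"
proof (induction d)
  case 0
  have "(\<Prod>m\<in>{1..k}. (\<Sum>j\<in>{m-k..m}. b j) choose b m) = (\<Prod>m\<in>{1..k}. (\<Sum>j\<in>{0..m}. b j) choose b m)"
    by (rule prod.cong) auto
  then show ?case by (simp add: multinomial_eq)
next
  case (Suc d)
  have "(\<Prod>i\<in>{1..Suc d}. (\<Sum>j\<in>{i..i+k}. b j) choose b (i+k)) =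
        (\<Prod>i\<in>{1..d}. (\<Sum>j\<in>{i..i+k}. b j) choose b (i+k)) *
        ((\<Sum>j\<in>{Suc d..Suc d+k}. b j) choose b (Suc d+k))"
    by simp
  moreover have "(\<Prod>m\<in>{1..Suc (k+d)}. (\<Sum>j\<in>{m-k..m}. b j) choose b m) =
     (\<Prod>m\<in>{1..k+d}. (\<Sum>j\<in>{m-k..m}. b j) choose b m) *
     ((\<Sum>j\<in>{Suc (k+d)-k..Suc (k+d)}. b j) choose b (Suc (k+d)))"
    by simp
  moreover have "Suc (k+d) - k = Suc d" "Suc d + k = Suc (k + d)" by simp_all
  ultimately show ?case using Suc.IH by (simp add: mult_ac add_ac)
qed

theorem proposition4p3:
  fixes t k :: nat and b :: "nat \<Rightarrow> nat"
  assumes "k \<le> t"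
  shows "card (vn_arrangements k (vn_multiset t b)) =
    multinomial_coeff {0..k} b *
    (\<Prod>i\<in>{1..t-k}. (\<Sum>j\<in>{i..i+k}. b j) choose b (i+k))"
proof -
  have t: "t = k + (t - k)" using assms by simp
  show ?thesis unfolding vn_Arr card_vn by (subst (1 2) t) (rule final_aux)
qed

end
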